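(* For integers $n,k$, let $A(n,k)$ be the number of partitions $\lambda\in\mathcal{H}_n$ with $\mathrm{rep}(\lambda)=k$ (so $A(n,k)=0$ if $k<0$ or $n\le 0$). Then $A(1,0)=1$ and for all $n\ge 2$ and all integers $k$, $$A(n,k)=A(n-1,k)+A(n-1,k-1)+A(n-2,k)-A(n-2,k-1).$$
   Context: A partition is a finite nonempty weakly decreasing sequence $\lambda=(\lambda_1,\ldots,\lambda_k)$ of positive integers; $\ell(\lambda)=k$ is its number of parts. The perimeter is $\Gamma(\lambda)=\lambda_1+\ell(\lambda)-1$; $\mathcal{H}_n$ is the set of partitions with perimeter $n$ (empty for $n\le 0$). $\mathrm{rep}(\lambda)=|\{1\le i\le \ell(\lambda)-1:\lambda_i=\lambda_{i+1}\}|$. *)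

theory Defs
  imports Main
begin

definition is_partition :: "nat list \<Rightarrow> bool" where
  "is_partition xs \<longleftrightarrow> xs \<noteq> [] \<and> sorted_wrt (\<ge>) xs \<and> (\<forall>x\<in>set xs. 0 < x)"

definition perimeter :: "nat list \<Rightarrow> int" where
  "perimeter xs = int (hd xs) + int (length xs) - 1"

text \<open>rep: number of 1 <= i <= length-1 with lambda_i = lambda_(i+1); written 0-indexed.\<close>
definition rep :: "nat list \<Rightarrow> nat" where
  "rep xs = card {i. i + 1 < length xs \<and> xs ! i = xs ! (i + 1)}"

text \<open>H_n: partitions of perimeter n (empty for n <= 0, since perimeter >= 1).\<close>
definition H :: "int \<Rightarrow> nat list set" where
  "H n = {xs. is_partition xs \<and> perimeter xs = n}"

definition A :: "int \<Rightarrow> int \<Rightarrow> int" where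
  "A n k = int (card {xs \<in> H n. int (rep xs) = k})"

end

theory Submission imports Defs begin

lemma rep_Nil: "rep [] = 0" by (simp add: rep_def)
lemma rep_single: "rep [x] = 0" by (simp add: rep_def)

lemma rep_Cons2: "rep (x # y # ys) = (if x = y then 1 else 0) + rep (y # ys)"
proof -
  let ?B = "{i. i + 1 < length (y#ys) \<and> (y#ys) ! i = (y#ys) ! (i + 1)}"
  have eq: "{i. i + 1 < length (x#y#ys) \<and> (x#y#ys) ! i = (x#y#ys) ! (i + 1)}
        = (if x = y then {0} else {}) \<union> Suc ` ?B"
    apply (rule set_eqI)
    subgoal for i by (cases i) auto
    done
  have fin: "finite ?B" by (rule finite_subset[of _ "{..<length (y#ys)}"]) auto
  have "card ((if x = y then {0} else {}) \<union> Suc ` ?B) = card (if x = y then {0::nat} else {}) + card (Suc ` ?B)"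
    by (rule card_Un_disjoint) (use fin in auto)
  also have "card (Suc ` ?B) = card ?B" by (simp add: card_image)
  finally show ?thesis unfolding rep_def eq by simp
qed

lemma ispart_Cons: "is_partition (x # xs) \<longleftrightarrow> 0 < x \<and> (xs = [] \<or> (is_partition xs \<and> hd xs \<le> x))"
proof (cases xs)
  case Nil then show ?thesis by (simp add: is_partition_def)
next
  case (Cons y ys)
  have t: "transp (\<lambda>a b::nat. a \<ge> b)" by (auto simp: transp_def)
  show ?thesis unfolding Cons is_partition_def using sorted_wrt2[OF t, of x y ys] by auto
qed

lemma perim_Cons: "perimeter (x # xs) = int x + int (length xs)"
  by (simp add: perimeter_def)

lemma finite_H: "finite (H n)"
proof -
  have "H n \<subseteq> {xs. set xs \<subseteq> {0..nat n} \<and> length xs \<le> nat n + 1}"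
  proof
    fix xs assume "xs \<in> H n"
    then obtain x ys where xs: "xs = x # ys" and p: "is_partition (x#ys)" and per: "int x + int (length ys) = n"
      unfolding H_def by (cases xs) (auto simp: is_partition_def perim_Cons)
    have "\<forall>y\<in>set ys. y \<le> x" using p by (simp add: is_partition_def)
    then show "xs \<in> {xs. set xs \<subseteq> {0..nat n} \<and> length xs \<le> nat n + 1}"
      using per xs by auto
  qed
  then show ?thesis by (rule finite_subset) (rule finite_lists_length_le, simp)
qed


definition S :: "int \<Rightarrow> int \<Rightarrow> nat list set" where
  "S n k = {xs \<in> H n. int (rep xs) = k}"
definition C :: "int \<Rightarrow> int \<Rightarrow> nat list set" where
  "C n k = {xs \<in> S n k. length xs = 1 \<or> xs ! 1 < xs ! 0}"

lemma finS: "finite (S n k)" unfolding S_def using finite_H[of n] by auto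
lemma finC: "finite (C n k)" unfolding C_def using finS[of n k] by auto

lemma memS_Cons: "x # xs \<in> S n k \<longleftrightarrow> is_partition (x # xs) \<and> int x + int (length xs) = n \<and> int (rep (x#xs)) = k"
  by (simp add: S_def H_def perim_Cons)

lemma S_nonempty: "xs \<in> S n k \<Longrightarrow> xs \<noteq> []"
  by (simp add: S_def H_def is_partition_def)

definition f1 :: "nat list \<Rightarrow> nat list" where "f1 m = hd m # m"
definition f2 :: "nat list \<Rightarrow> nat list" where "f2 m = Suc (hd m) # m"
definition f3 :: "nat list \<Rightarrow> nat list" where "f3 m = Suc (hd m) # tl m"

lemma S_split: "S n k = f1 ` S (n-1) (k-1) \<union> C n k"
proof (rule set_eqI, rule iffI)
  fix xs assume xs: "xs \<in> S n k"
  then obtain x xs' where e: "xs = x # xs'" using S_nonempty by (cases xs) auto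
  show "xs \<in> f1 ` S (n-1) (k-1) \<union> C n k"
  proof (cases xs')
    case Nil then show ?thesis using xs e by (simp add: C_def)
  next
    case (Cons y ys)
    show ?thesis
    proof (cases "x = y")
      case True
      have "y # ys \<in> S (n-1) (k-1)" using xs unfolding e Cons True memS_Cons ispart_Cons rep_Cons2
        by auto
      moreover have "xs = f1 (y # ys)" using e Cons True by (simp add: f1_def)
      ultimately show ?thesis by blast
    next
      case False
      then have "y < x" using xs unfolding e Cons memS_Cons ispart_Cons by auto
      then show ?thesis using xs e Cons by (auto simp: C_def)
    qed
  qed
next
  fix xs assume "xs \<in> f1 ` S (n-1) (k-1) \<union> C n k"
  then show "xs \<in> S n k"
  proof
    assume "xs \<in> f1 ` S (n-1) (k-1)"
    then obtain m where m: "m \<in> S (n-1) (k-1)" "xs = f1 m" by auto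
    then obtain y ys where "m = y # ys" using S_nonempty by (cases m) auto
    then show ?thesis using m unfolding f1_def
      by (auto simp: memS_Cons ispart_Cons rep_Cons2)
  qed (simp add: C_def)
qed

lemma S_disj: "f1 ` S (n-1) (k-1) \<inter> C n k = {}"
proof -
  { fix m assume "m \<in> S (n-1) (k-1)" "f1 m \<in> C n k"
    then obtain y ys where "m = y # ys" using S_nonempty by (cases m) auto
    with \<open>f1 m \<in> C n k\<close> have False by (simp add: C_def f1_def) }
  then show ?thesis by blast
qed

lemma A_split: "A n k = A (n-1) (k-1) + int (card (C n k))"
proof -
  have "A n k = int (card (S n k))" by (simp add: A_def S_def)
  also have "card (S n k) = card (f1 ` S (n-1) (k-1)) + card (C n k)"
    unfolding S_split[of n k] by (rule card_Un_disjoint) (use finS finC S_disj in auto)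
  also have "card (f1 ` S (n-1) (k-1)) = card (S (n-1) (k-1))"
    by (rule card_image) (auto simp: inj_on_def f1_def)
  finally show ?thesis by (simp add: A_def S_def)
qed

lemma C_split: assumes n: "n \<ge> 2" shows "C n k = f2 ` S (n-2) k \<union> f3 ` C (n-1) k"
proof (rule set_eqI, rule iffI)
  fix xs assume xs: "xs \<in> C n k"
  then obtain x xs' where e: "xs = x # xs'" using S_nonempty by (cases xs) (auto simp: C_def)
  have xS: "x # xs' \<in> S n k" using xs e by (simp add: C_def)
  show "xs \<in> f2 ` S (n-2) k \<union> f3 ` C (n-1) k"
  proof (cases xs')
    case Nil
    have "x \<ge> 2" using xS n Nil unfolding memS_Cons by auto
    then have "[x - 1] \<in> S (n-1) k" using xS Nil unfolding memS_Cons
      by (auto simp: ispart_Cons rep_single of_nat_diff)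
    then have "[x - 1] \<in> C (n-1) k" by (simp add: C_def)
    moreover have "xs = f3 [x-1]" using e Nil \<open>x \<ge> 2\<close> by (simp add: f3_def)
    ultimately show ?thesis by blast
  next
    case (Cons y ys)
    have lt: "y < x" using xs e Cons by (simp add: C_def)
    show ?thesis
    proof (cases "x = Suc y")
      case True
      have "y # ys \<in> S (n-2) k" using xS lt unfolding Cons True memS_Cons ispart_Cons rep_Cons2
        by auto
      moreover have "xs = f2 (y # ys)" using e Cons True by (simp add: f2_def)
      ultimately show ?thesis by blast
    next
      case False
      then have "(x - 1) # y # ys \<in> C (n-1) k" using xS lt unfolding Cons C_def
        by (auto simp: memS_Cons ispart_Cons rep_Cons2 of_nat_diff)
      moreover have "xs = f3 ((x - 1) # y # ys)" using e Cons lt by (simp add: f3_def)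
      ultimately show ?thesis by blast
    qed
  qed
next
  fix xs assume "xs \<in> f2 ` S (n-2) k \<union> f3 ` C (n-1) k"
  then show "xs \<in> C n k"
  proof
    assume "xs \<in> f2 ` S (n-2) k"
    then obtain m where m: "m \<in> S (n-2) k" "xs = f2 m" by auto
    then obtain y ys where "m = y # ys" using S_nonempty by (cases m) auto
    then show ?thesis using m unfolding f2_def C_def
      by (auto simp: memS_Cons ispart_Cons rep_Cons2)
  next
    assume "xs \<in> f3 ` C (n-1) k"
    then obtain m where m: "m \<in> C (n-1) k" "xs = f3 m" by auto
    then obtain z zs where mz: "m = z # zs" using S_nonempty by (cases m) (auto simp: C_def)
    show ?thesis
    proof (cases zs)
      case Nil then show ?thesis using m mz unfolding f3_def C_def
        by (auto simp: memS_Cons ispart_Cons rep_single)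
    next
      case (Cons y ys) then show ?thesis using m mz unfolding f3_def C_def
        by (auto simp: memS_Cons ispart_Cons rep_Cons2)
    qed
  qed
qed

lemma C_disj: "f2 ` S (n-2) k \<inter> f3 ` C (n-1) k = {}"
proof -
  { fix m m' assume "m \<in> S (n-2) k" "m' \<in> C (n-1) k" "f2 m = f3 m'"
    then obtain y ys where "m = y # ys" using S_nonempty by (cases m) auto
    moreover obtain z zs where "m' = z # zs" using \<open>m' \<in> C (n-1) k\<close> S_nonempty by (cases m') (auto simp: C_def)
    ultimately have False using \<open>f2 m = f3 m'\<close> \<open>m' \<in> C (n-1) k\<close>
      by (auto simp: C_def f2_def f3_def) }
  then show ?thesis by blast
qed

lemma C_rec: assumes "n \<ge> 2" shows "int (card (C n k)) = A (n-2) k + int (card (C (n-1) k))"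
proof -
  have "card (C n k) = card (f2 ` S (n-2) k) + card (f3 ` C (n-1) k)"
    unfolding C_split[OF assms] by (rule card_Un_disjoint) (use finS finC C_disj in auto)
  also have "card (f2 ` S (n-2) k) = card (S (n-2) k)"
    by (rule card_image) (auto simp: inj_on_def f2_def)
  also have "card (f3 ` C (n-1) k) = card (C (n-1) k)"
  proof (rule card_image, rule inj_onI)
    fix a b assume "a \<in> C (n-1) k" "b \<in> C (n-1) k" "f3 a = f3 b"
    moreover have "a \<noteq> []" "b \<noteq> []" using calculation S_nonempty by (auto simp: C_def)
    ultimately show "a = b" by (cases a; cases b) (auto simp: f3_def)
  qed
  finally show ?thesis by (simp add: A_def S_def)
qed

lemma A10: "A 1 0 = 1"
proof -
  have "S 1 0 = {[1]}"
  proof (rule set_eqI, rule iffI)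
    fix xs assume xs: "xs \<in> S 1 0"
    then obtain x ys where "xs = x # ys" using S_nonempty by (cases xs) auto
    moreover have "0 < x" "int x + int (length ys) = 1" using xs calculation
      by (auto simp: memS_Cons ispart_Cons)
    ultimately show "xs \<in> {[1]}" by (cases ys) auto
  qed (auto simp: memS_Cons ispart_Cons rep_single)
  then show ?thesis by (simp add: A_def S_def)
qed

theorem lemma2p1:
  shows "A 1 0 = 1 \<and>
    (\<forall>n k::int. n \<ge> 2 \<longrightarrow>
       A n k = A (n - 1) k + A (n - 1) (k - 1) + A (n - 2) k - A (n - 2) (k - 1))"
proof (intro conjI allI impI)
  show "A 1 0 = 1" by (rule A10)
  fix n k :: int assume n: "n \<ge> 2"
  have a: "A n k = A (n-1) (k-1) + int (card (C n k))" by (rule A_split)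
  have b: "A (n-1) k = A (n-1-1) (k-1) + int (card (C (n-1) k))" by (rule A_split)
  have c: "int (card (C n k)) = A (n-2) k + int (card (C (n-1) k))" by (rule C_rec[OF n])
  have "n - 1 - 1 = n - 2" by simp
  then show "A n k = A (n - 1) k + A (n - 1) (k - 1) + A (n - 2) k - A (n - 2) (k - 1)"
    using a b c by simp
qed

end
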